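(* Let $\mathbb{G}$ be the class of DAGs on $V$. For a distribution $P$ and a DAG $G$ on $V$, each of the following statements implies the next: (1) $P$ is minimally Markovian w.r.t. $G$; (2) $G$ is a sparsest Markov graph of $P$; (3) $P$ is Pearl-minimal to $G$; (4) $P$ is causally minimal to $G$.
   Context: $J(P)$ denotes the set of conditional independence triples $(A,B,C)$ (disjoint subsets of $V$, $A\perp\!\!\!\perp B\mid C$) of $P$, and $J(G)$ the set of d-separation triples of the DAG $G$. $P$ is Markovian to $G$ if $J(G)\subseteq J(P)$. The skeleton $\mathrm{sk}(G)$ is the undirected graph obtained by removing arrowheads; $\mathrm{sk}(P)$ is the undirected graph on $V$ in which $i,j$ are adjacent iff there is no $C\subseteq V\setminus\{i,j\}$ with $i\perp\!\!\!\perp j\mid C$. $P$ is adjacency faithful w.r.t. $G$ if $\mathrm{sk}(P)=\mathrm{sk}(G)$; $P$ is minimally Markovian w.r.t. $G$ if $P$ is Markovian to $G$ and adjacency faithful w.r.t. $G$. With $|E(G)|$ the number of edges, $G\in\mathbb{G}$ is a sparsest Markov graph of $P$ if $P$ is Markovian to $G$ and $|E(G)|\le|E(G')|$ for all $G'\in\mathbb{G}$ to which $P$ is Markovian. $P$ is Pearl-minimal to $G\in\mathbb{G}$ if there is no $G'\in\mathbb{G}$ with $J(G)\subsetneq J(G')\subseteq J(P)$. $P$ is causally minimal to $G\in\mathbb{G}$ if $P$ is Markovian to $G$ and not Markovian to any proper subgraph $G'\in\mathbb{G}$ of $G$. *)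

theory Defs
  imports Main
begin

text \<open>A DAG on the finite vertex set V is given by its set of directed edges E
  (an edge (x,y) means x \<rightarrow> y). An independence model (such as J(P) of a
  distribution P) is a set of triples (A,B,C) meaning A independent of B given C.\<close>

type_synonym 'a triple = "'a set \<times> 'a set \<times> 'a set"

definition dag :: "'a set \<Rightarrow> ('a \<times> 'a) set \<Rightarrow> bool" where
  "dag V E \<longleftrightarrow> finite V \<and> E \<subseteq> V \<times> V \<and> acyclic E"

definition adj :: "('a \<times> 'a) set \<Rightarrow> 'a \<Rightarrow> 'a \<Rightarrow> bool" where
  "adj E x y \<longleftrightarrow> (x, y) \<in> E \<or> (y, x) \<in> E"

definition is_path :: "('a \<times> 'a) set \<Rightarrow> 'a \<Rightarrow> 'a \<Rightarrow> 'a list \<Rightarrow> bool" where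
  "is_path E a b xs \<longleftrightarrow> length xs \<ge> 2 \<and> distinct xs \<and> hd xs = a \<and> last xs = b \<and>
     (\<forall>i. Suc i < length xs \<longrightarrow> adj E (xs ! i) (xs ! Suc i))"

definition collider :: "('a \<times> 'a) set \<Rightarrow> 'a list \<Rightarrow> nat \<Rightarrow> bool" where
  "collider E xs i \<longleftrightarrow> (xs ! (i - 1), xs ! i) \<in> E \<and> (xs ! Suc i, xs ! i) \<in> E"

definition active_path :: "('a \<times> 'a) set \<Rightarrow> 'a set \<Rightarrow> 'a list \<Rightarrow> bool" where
  "active_path E C xs \<longleftrightarrow> (\<forall>i. 0 < i \<and> Suc i < length xs \<longrightarrow>
     (collider E xs i \<longrightarrow> (\<exists>w\<in>C. (xs ! i, w) \<in> E\<^sup>*)) \<and>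
     (\<not> collider E xs i \<longrightarrow> xs ! i \<notin> C))"

definition d_separated :: "('a \<times> 'a) set \<Rightarrow> 'a set \<Rightarrow> 'a set \<Rightarrow> 'a set \<Rightarrow> bool" where
  "d_separated E A B C \<longleftrightarrow>
     (\<forall>a\<in>A. \<forall>b\<in>B. \<not> (\<exists>xs. is_path E a b xs \<and> active_path E C xs))"

definition disjoint_triple :: "'a set \<Rightarrow> 'a triple \<Rightarrow> bool" where
  "disjoint_triple V t \<longleftrightarrow> (case t of (A, B, C) \<Rightarrow>
     A \<subseteq> V \<and> B \<subseteq> V \<and> C \<subseteq> V \<and> A \<inter> B = {} \<and> A \<inter> C = {} \<and> B \<inter> C = {})"

definition J_G :: "'a set \<Rightarrow> ('a \<times> 'a) set \<Rightarrow> 'a triple set" where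
  "J_G V E = {(A, B, C). disjoint_triple V (A, B, C) \<and> d_separated E A B C}"

definition markovian :: "'a set \<Rightarrow> 'a triple set \<Rightarrow> ('a \<times> 'a) set \<Rightarrow> bool" where
  "markovian V JP E \<longleftrightarrow> J_G V E \<subseteq> JP"

definition skel_G :: "('a \<times> 'a) set \<Rightarrow> 'a set set" where
  "skel_G E = {{x, y} | x y. (x, y) \<in> E}"

definition skel_P :: "'a set \<Rightarrow> 'a triple set \<Rightarrow> 'a set set" where
  "skel_P V JP = {{i, j} | i j. i \<in> V \<and> j \<in> V \<and> i \<noteq> j \<and>
      \<not> (\<exists>C. C \<subseteq> V - {i, j} \<and> ({i}, {j}, C) \<in> JP)}"

definition adjacency_faithful :: "'a set \<Rightarrow> 'a triple set \<Rightarrow> ('a \<times> 'a) set \<Rightarrow> bool" where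
  "adjacency_faithful V JP E \<longleftrightarrow> skel_P V JP = skel_G E"

definition minimally_markovian :: "'a set \<Rightarrow> 'a triple set \<Rightarrow> ('a \<times> 'a) set \<Rightarrow> bool" where
  "minimally_markovian V JP E \<longleftrightarrow> markovian V JP E \<and> adjacency_faithful V JP E"

definition sparsest_markov :: "'a set \<Rightarrow> 'a triple set \<Rightarrow> ('a \<times> 'a) set \<Rightarrow> bool" where
  "sparsest_markov V JP E \<longleftrightarrow> dag V E \<and> markovian V JP E \<and>
     (\<forall>E'. dag V E' \<and> markovian V JP E' \<longrightarrow> card E \<le> card E')"

text \<open>Pearl-minimality (read as including Markovianity, i.e. G is a minimal I-map).\<close>
definition pearl_minimal :: "'a set \<Rightarrow> 'a triple set \<Rightarrow> ('a \<times> 'a) set \<Rightarrow> bool" where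
  "pearl_minimal V JP E \<longleftrightarrow> dag V E \<and> markovian V JP E \<and>
     \<not> (\<exists>E'. dag V E' \<and> J_G V E \<subset> J_G V E' \<and> J_G V E' \<subseteq> JP)"

definition causally_minimal :: "'a set \<Rightarrow> 'a triple set \<Rightarrow> ('a \<times> 'a) set \<Rightarrow> bool" where
  "causally_minimal V JP E \<longleftrightarrow> markovian V JP E \<and>
     \<not> (\<exists>E'. E' \<subset> E \<and> dag V E' \<and> markovian V JP E')"

end

theory Submission
  imports Defs
begin


definition ok :: "('a \<times> 'a) set \<Rightarrow> 'a set \<Rightarrow> 'a \<Rightarrow> 'a \<Rightarrow> 'a \<Rightarrow> bool" where
  "ok E C u v w \<longleftrightarrow> (((u,v)\<in>E \<and> (w,v)\<in>E) \<longrightarrow> (\<exists>c\<in>C. (v,c)\<in>E\<^sup>*)) \<and>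
      (\<not>((u,v)\<in>E \<and> (w,v)\<in>E) \<longrightarrow> v \<notin> C)"

lemma ok_sym: "ok E C u v w = ok E C w v u"
  unfolding ok_def by blast

lemma active_ok: "active_path E C xs \<longleftrightarrow>
  (\<forall>i. 0<i \<and> Suc i < length xs \<longrightarrow> ok E C (xs!(i-1)) (xs!i) (xs!Suc i))"
  unfolding active_path_def ok_def collider_def by blast

definition walk :: "('a \<times> 'a) set \<Rightarrow> 'a \<Rightarrow> 'a \<Rightarrow> 'a list \<Rightarrow> bool" where
  "walk E a b xs \<longleftrightarrow> length xs \<ge> 2 \<and> xs!0 = a \<and> xs!(length xs - 1) = b \<and>
     (\<forall>i. Suc i < length xs \<longrightarrow> adj E (xs ! i) (xs ! Suc i))"

lemma is_path_walk: "is_path E a b xs \<longleftrightarrow> walk E a b xs \<and> distinct xs"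
  unfolding is_path_def walk_def
  by (metis hd_conv_nth last_conv_nth list.size(3) not_numeral_le_zero)

lemma acyc2: "acyclic E \<Longrightarrow> (x,y)\<in>E \<Longrightarrow> (y,x)\<in>E \<Longrightarrow> False"
  by (meson acyclic_def trancl.r_into_trancl trancl_into_trancl)

lemma acyc1: "acyclic E \<Longrightarrow> (x,x)\<in>E \<Longrightarrow> False"
  by (meson acyclic_def trancl.r_into_trancl)

lemma acyc3: "acyclic E \<Longrightarrow> (x,y)\<in>E \<Longrightarrow> (y,z)\<in>E \<Longrightarrow> (z,x)\<in>E \<Longrightarrow> False"
  by (meson acyclic_def trancl.r_into_trancl trancl_into_trancl)

lemma acycT: "acyclic E \<Longrightarrow> (x,y)\<in>E\<^sup>+ \<Longrightarrow> (y,x)\<in>E\<^sup>* \<Longrightarrow> False"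
  by (meson acyclic_def trancl_rtrancl_trancl)

lemma adj_sym: "adj E x y = adj E y x" unfolding adj_def by blast

lemma active_rev:
  assumes "active_path E C xs" shows "active_path E C (rev xs)"
proof -
  let ?n = "length xs"
  show ?thesis unfolding active_ok
  proof (intro allI impI)
    fix i assume i: "0<i \<and> Suc i < length (rev xs)"
    define j where "j = ?n - Suc i"
    have j: "0 < j" "Suc j < ?n" using i by (auto simp: j_def)
    have "ok E C (xs!(j-1)) (xs!j) (xs!Suc j)" using assms j unfolding active_ok by blast
    moreover have "rev xs ! (i-1) = xs ! Suc j" "rev xs ! i = xs ! j" "rev xs ! Suc i = xs!(j-1)"
      using i by (auto simp: rev_nth j_def Suc_diff_Suc)
    ultimately show "ok E C (rev xs!(i-1)) (rev xs!i) (rev xs!Suc i)" by (simp add: ok_sym)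
  qed
qed

lemma path_rev:
  assumes "is_path E a b xs" shows "is_path E b a (rev xs)"
  using assms unfolding is_path_def
  apply (auto simp: hd_rev last_rev)
  subgoal for i
    apply (drule spec[of _ "length xs - Suc (Suc i)"])
    apply (auto simp: rev_nth adj_sym Suc_diff_Suc)
    done
  done

lemma dsep_sym: "d_separated E A B C \<Longrightarrow> d_separated E B A C"
  unfolding d_separated_def by (metis active_rev path_rev)



lemma fwd_prop:
  assumes adjw: "\<forall>i. Suc i < length xs \<longrightarrow> adj E (xs!i) (xs!Suc i)"
    and opn: "\<forall>i. 0<i \<and> Suc i<length xs \<longrightarrow> ok E C (xs!(i-1)) (xs!i) (xs!Suc i)"
    and ac: "acyclic E" and e: "(xs!k, xs!Suc k) \<in> E" and m: "m < length xs" "Suc k \<le> m"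
  shows "((xs!k, xs!m)\<in>E\<^sup>+ \<and> (xs!(m-1), xs!m)\<in>E) \<or>
         (\<exists>i. k<i \<and> i<m \<and> (xs!k,xs!i)\<in>E\<^sup>+ \<and> (\<exists>w\<in>C. (xs!i,w)\<in>E\<^sup>*))"
  using m(2,1)
proof (induction m rule: dec_induct)
  case base then show ?case using e by auto
next
  case (step n)
  have nl: "n < length xs" using step by simp
  from step.IH[OF nl] show ?case
  proof
    assume A: "(xs!k, xs!n)\<in>E\<^sup>+ \<and> (xs!(n-1), xs!n)\<in>E"
    have okn: "ok E C (xs!(n-1)) (xs!n) (xs!Suc n)" using opn step by auto
    show ?case
    proof (cases "(xs!Suc n, xs!n) \<in> E")
      case True
      then have "\<exists>w\<in>C. (xs!n,w)\<in>E\<^sup>*" using okn A unfolding ok_def by blast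
      then show ?thesis using A step by auto
    next
      case False
      then have "(xs!n, xs!Suc n)\<in>E" using adjw step unfolding adj_def by auto
      then show ?thesis using A by auto
    qed
  qed (use step in auto)
qed

lemma sep_pa:
  assumes d: "dag V E" and xy: "x \<noteq> y" "\<not> adj E x y" "(x,y)\<notin>E\<^sup>+"
  shows "d_separated E {x} {y} {w. (w,x)\<in>E}"
  unfolding d_separated_def
proof (clarsimp)
  fix xs assume p: "is_path E x y xs" and a: "active_path E {w. (w,x)\<in>E} xs"
  have ac: "acyclic E" using d by (simp add: dag_def)
  have w: "walk E x y xs" using p by (simp add: is_path_walk)
  let ?n = "length xs"
  have adjw: "\<forall>i. Suc i < ?n \<longrightarrow> adj E (xs!i) (xs!Suc i)" using w unfolding walk_def by blast
  have opn: "\<forall>i. 0<i \<and> Suc i<?n \<longrightarrow> ok E {w. (w,x)\<in>E} (xs!(i-1)) (xs!i) (xs!Suc i)"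
    using a unfolding active_ok by blast
  have x0: "xs!0 = x" and yl: "xs!(?n-1) = y" and n2: "?n \<ge> 2" using w unfolding walk_def by auto
  have n3: "?n \<ge> 3"
  proof (rule ccontr)
    assume "\<not> ?n \<ge> 3" then have "?n = 2" using n2 by auto
    then show False using adjw[rule_format, of 0] x0 yl xy by auto
  qed
  have e0: "(xs!0, xs!Suc 0) \<in> E"
  proof (rule ccontr)
    assume nE: "(xs!0, xs!Suc 0) \<notin> E"
    then have e1: "(xs!1, x) \<in> E" using adjw[rule_format, of 0] n3 x0 unfolding adj_def by auto
    have "ok E {w. (w,x)\<in>E} (xs!(1-1)) (xs!1) (xs!Suc 1)" using opn[rule_format, of 1] n3 by simp
    then have "ok E {w. (w,x)\<in>E} (xs!0) (xs!1) (xs!Suc 1)" by simp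
    then have "xs!1 \<notin> {w. (w,x)\<in>E}" using nE unfolding ok_def by auto
    then show False using e1 by simp
  qed
  have F: "((xs!0, xs!(?n-1))\<in>E\<^sup>+ \<and> (xs!(?n-1-1), xs!(?n-1))\<in>E) \<or>
         (\<exists>i. 0<i \<and> i<?n-1 \<and> (xs!0,xs!i)\<in>E\<^sup>+ \<and> (\<exists>w\<in>{w. (w,x)\<in>E}. (xs!i,w)\<in>E\<^sup>*))"
    by (rule fwd_prop[OF adjw opn ac e0]) (use n3 in simp_all)
  then show False
  proof (elim disjE exE conjE bexE)
    assume "(xs!0, xs!(?n-1))\<in>E\<^sup>+" then show False using x0 yl xy(3) by simp
  next
    fix i w assume h1: "(xs!0, xs!i)\<in>E\<^sup>+" and h2: "(xs!i,w)\<in>E\<^sup>*" and "w\<in>{w. (w,x)\<in>E}"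
    from h1 h2 have "(xs!0,w)\<in>E\<^sup>+" by (rule trancl_rtrancl_trancl)
    then have "(xs!0,x)\<in>E\<^sup>+" using \<open>w\<in>{w. (w,x)\<in>E}\<close> by (simp add: trancl_into_trancl)
    then have "(x,x)\<in>E\<^sup>+" using x0 by simp
    then show False using ac unfolding acyclic_def by blast
  qed
qed

lemma sep_exists:
  assumes d: "dag V E" and xy: "x\<in>V" "y\<in>V" "x \<noteq> y" "\<not> adj E x y"
  shows "\<exists>C. ({x},{y},C)\<in>J_G V E \<and> (\<forall>w\<in>C. (w,x)\<in>E \<or> (w,y)\<in>E) \<and> C \<subseteq> V - {x,y}"
proof -
  have ac: "acyclic E" and EV: "E \<subseteq> V \<times> V" using d unfolding dag_def by auto
  have "(x,y)\<notin>E\<^sup>+ \<or> (y,x)\<notin>E\<^sup>+"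
  proof (rule ccontr)
    assume "\<not> ?thesis"
    then have "(x,x)\<in>E\<^sup>+" by (auto intro: trancl_trans)
    then show False using ac unfolding acyclic_def by blast
  qed
  then obtain C where s: "d_separated E {x} {y} C" and Cp: "\<forall>w\<in>C. (w,x)\<in>E \<or> (w,y)\<in>E"
  proof
    assume "(x,y)\<notin>E\<^sup>+" then show ?thesis using sep_pa[OF d xy(3,4)] that by auto
  next
    assume "(y,x)\<notin>E\<^sup>+"
    then have "d_separated E {y} {x} {w. (w,y)\<in>E}"
      using sep_pa[OF d xy(3)[symmetric]] xy(4) adj_sym by metis
    then show ?thesis using dsep_sym that by blast
  qed
  have CV: "C \<subseteq> V - {x,y}"
  proof
    fix w assume "w\<in>C"
    then have "(w,x)\<in>E \<or> (w,y)\<in>E" using Cp by auto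
    then show "w \<in> V - {x,y}" using EV xy(4) acyc1[OF ac] unfolding adj_def by auto
  qed
  have "({x},{y},C)\<in>J_G V E"
    unfolding J_G_def disjoint_triple_def using s CV xy by auto
  then show ?thesis using Cp CV by blast
qed



lemma shortcut:
  assumes ac: "acyclic E" and ab: "a \<noteq> b"
  shows "walk E a b xs \<Longrightarrow> (\<forall>i. 0<i \<and> Suc i<length xs \<longrightarrow> ok E C (xs!(i-1)) (xs!i) (xs!Suc i))
     \<Longrightarrow> \<exists>ys. is_path E a b ys \<and> active_path E C ys"
proof (induction "length xs" arbitrary: xs rule: less_induct)
  case less
  note w = less.prems(1) and opn = less.prems(2)
  let ?n = "length xs"
  have adjw: "\<forall>i. Suc i < ?n \<longrightarrow> adj E (xs!i) (xs!Suc i)" using w unfolding walk_def by blast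
  have x0: "xs!0 = a" and yl: "xs!(?n-1) = b" and n2: "?n \<ge> 2" using w unfolding walk_def by auto
  show ?case
  proof (cases "distinct xs")
    case True
    then have "is_path E a b xs" using w by (simp add: is_path_walk)
    moreover have "active_path E C xs" using opn unfolding active_ok by blast
    ultimately show ?thesis by blast
  next
    case False
    then obtain i j where ij: "i<j" "j<?n" "xs!i = xs!j"
      unfolding distinct_conv_nth by (metis linorder_neqE_nat)
    define ys where "ys = take (Suc i) xs @ drop (Suc j) xs"
    define g where "g k = (if k \<le> i then k else k + (j - i))" for k
    have len: "length ys = Suc i + (?n - Suc j)" using ij unfolding ys_def by simp
    have nth: "ys!k = xs!(g k)" if "k < length ys" for k
    proof -
      have "Suc (j + k - Suc i) = k + j - i" if "\<not> k < Suc i" using that ij by simp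
      then show ?thesis using that ij unfolding ys_def g_def by (auto simp: nth_append)
    qed
    have glt: "g k < ?n" if "k < length ys" for k
      using that ij len unfolding g_def by auto
    have lt: "length ys < ?n" using len ij by simp
    let ?v = "xs!i"
    have wys: "walk E a b ys"
      unfolding walk_def
    proof (intro conjI allI impI)
      show "2 \<le> length ys"
      proof (rule ccontr)
        assume "\<not> 2 \<le> length ys"
        then have "i = 0" "j = ?n - 1" using len ij by auto
        then show False using x0 yl ij ab by simp
      qed
      show "ys!0 = a" using nth[of 0] len x0 by (simp add: g_def)
      show "ys!(length ys - 1) = b"
      proof (cases "j = ?n - 1")
        case True
        then have "length ys - 1 = i" using len ij by simp
        then show ?thesis using nth[of i] len ij True yl by (simp add: g_def)
      next
        case False
        then have "g (length ys - 1) = ?n - 1" using len ij by (simp add: g_def)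
        then show ?thesis using nth[of "length ys - 1"] len yl by simp
      qed
      fix k assume k: "Suc k < length ys"
      show "adj E (ys!k) (ys!Suc k)"
      proof (cases "k = i")
        case True
        then have "ys!k = xs!j" "ys!Suc k = xs!Suc j"
          using nth[of k] nth[of "Suc k"] k ij by (auto simp: g_def)
        moreover have "Suc j < ?n" using k len True by simp
        ultimately show ?thesis using adjw by simp
      next
        case False
        then have "ys!k = xs!(g k)" "ys!Suc k = xs!Suc (g k)" "Suc (g k) < ?n"
          using nth[of k] nth[of "Suc k"] glt[of "Suc k"] k by (auto simp: g_def)
        then show ?thesis using adjw by simp
      qed
    qed
    have oys: "\<forall>k. 0<k \<and> Suc k<length ys \<longrightarrow> ok E C (ys!(k-1)) (ys!k) (ys!Suc k)"
    proof (intro allI impI)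
      fix k assume k: "0<k \<and> Suc k<length ys"
      show "ok E C (ys!(k-1)) (ys!k) (ys!Suc k)"
      proof (cases "k = i")
        case False
        have e1: "ys!k = xs!(g k)" "ys!Suc k = xs!Suc (g k)" "Suc (g k) < ?n" "0 < g k"
          using nth[of k] nth[of "Suc k"] glt[of "Suc k"] k False by (auto simp: g_def)
        have "ys!(k-1) = xs!(g (k - 1))" using nth[of "k-1"] k by linarith
        also have "\<dots> = xs!(g k - 1)"
        proof (cases "k = Suc i")
          case True then show ?thesis using ij by (simp add: g_def)
        next
          case False then show ?thesis using \<open>k \<noteq> i\<close> k by (auto simp: g_def)
        qed
        finally have "ys!(k-1) = xs!(g k - 1)" .
        then show ?thesis using e1 opn by simp
      next
        case True
        have e1: "ys!(k-1) = xs!(i-1)" "ys!k = ?v" "ys!Suc k = xs!Suc j" "0<i" "Suc j < ?n"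
          using nth[of k] nth[of "Suc k"] nth[of "k-1"] k True len ij by (auto simp: g_def)
        have oki: "ok E C (xs!(i-1)) ?v (xs!Suc i)" using opn[rule_format, of i] e1 ij by linarith
        have okj: "ok E C (xs!(j-1)) (xs!j) (xs!Suc j)" using opn[rule_format, of j] e1 ij by linarith
        have "ok E C (xs!(i-1)) ?v (xs!Suc j)"
          unfolding ok_def
        proof (intro conjI impI)
          assume col: "(xs!(i-1), ?v)\<in>E \<and> (xs!Suc j, ?v)\<in>E"
          show "\<exists>c\<in>C. (?v, c)\<in>E\<^sup>*"
          proof (cases "(xs!Suc i, ?v)\<in>E")
            case True then show ?thesis using oki col unfolding ok_def by blast
          next
            case False
            have "Suc i < ?n" using ij by simp
            then have "adj E (xs!i) (xs!Suc i)" using adjw by blast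
            then have ei: "(xs!i, xs!Suc i)\<in>E" using False unfolding adj_def by blast
            have F: "((xs!i, xs!j)\<in>E\<^sup>+ \<and> (xs!(j-1), xs!j)\<in>E) \<or>
              (\<exists>i'. i<i' \<and> i'<j \<and> (xs!i,xs!i')\<in>E\<^sup>+ \<and> (\<exists>w\<in>C. (xs!i',w)\<in>E\<^sup>*))"
              by (rule fwd_prop[OF adjw opn ac ei]) (use ij in simp_all)
            then show ?thesis
            proof (elim disjE exE conjE bexE)
              assume "(xs!i, xs!j)\<in>E\<^sup>+"
              then have "(xs!i,xs!i)\<in>E\<^sup>+" using ij by simp
              then show ?thesis using ac unfolding acyclic_def by blast
            next
              fix i' w assume h1: "(xs!i,xs!i')\<in>E\<^sup>+" and h2: "(xs!i',w)\<in>E\<^sup>*" and h3: "w\<in>C"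
              from h1 have "(xs!i,xs!i')\<in>E\<^sup>*" by (rule trancl_into_rtrancl)
              from this h2 have "(xs!i,w)\<in>E\<^sup>*" by (rule rtrancl_trans)
              then show ?thesis using h3 by blast
            qed
          qed
        next
          assume ncol: "\<not> ((xs!(i-1), ?v)\<in>E \<and> (xs!Suc j, ?v)\<in>E)"
          show "?v \<notin> C"
          proof
            assume vC: "?v \<in> C"
            then have "(xs!(i-1), ?v)\<in>E" using oki unfolding ok_def by blast
            moreover have "(xs!Suc j, ?v)\<in>E" using okj vC ij unfolding ok_def by auto
            ultimately show False using ncol by blast
          qed
        qed
        then show ?thesis using e1 by simp
      qed
    qed
    show ?thesis using less.hyps[OF lt wys oys] .
  qed
qed



lemma remove_one:
  assumes p: "is_path E a b xs" and a: "active_path E C xs"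
    and k: "0<k" "Suc k < length xs" and xz: "adj E (xs!(k-1)) (xs!Suc k)"
    and J1: "2 \<le> k \<longrightarrow> ok E C (xs!(k-2)) (xs!(k-1)) (xs!Suc k)"
    and J2: "Suc (Suc k) < length xs \<longrightarrow> ok E C (xs!(k-1)) (xs!Suc k) (xs!Suc(Suc k))"
  shows "\<exists>ys. is_path E a b ys \<and> active_path E C ys \<and> length ys < length xs"
proof -
  let ?n = "length xs"
  have w: "walk E a b xs" and dx: "distinct xs" using p by (simp_all add: is_path_walk)
  have adjw: "\<forall>i. Suc i < ?n \<longrightarrow> adj E (xs!i) (xs!Suc i)" using w unfolding walk_def by blast
  have x0: "xs!0 = a" and yl: "xs!(?n-1) = b" and n2: "?n \<ge> 2" using w unfolding walk_def by auto
  have opn: "\<forall>i. 0<i \<and> Suc i<?n \<longrightarrow> ok E C (xs!(i-1)) (xs!i) (xs!Suc i)"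
    using a unfolding active_ok by blast
  define ys where "ys = take k xs @ drop (Suc k) xs"
  have len: "length ys = ?n - 1" using k unfolding ys_def by simp
  have nth: "ys!m = (if m < k then xs!m else xs!Suc m)" if "m < length ys" for m
    using that k len unfolding ys_def by (auto simp: nth_append)
  have dys: "distinct ys" unfolding ys_def
    using dx set_take_disj_set_drop_if_distinct[OF dx, of k "Suc k"] by simp
  have wys: "walk E a b ys"
    unfolding walk_def
  proof (intro conjI allI impI)
    show "2 \<le> length ys" using len k by simp
    show "ys!0 = a" using nth[of 0] len k x0 by simp
    have "length ys - 1 \<ge> k" "Suc (length ys - 1) = ?n - 1" "length ys - 1 < length ys" using len k by auto
    then show "ys!(length ys - 1) = b" using nth[of "length ys - 1"] yl by simp
    fix m assume m: "Suc m < length ys"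
    show "adj E (ys!m) (ys!Suc m)"
    proof (cases "m < k")
      case True
      show ?thesis
      proof (cases "Suc m < k")
        case True then show ?thesis using nth[of m] nth[of "Suc m"] m adjw len by simp
      next
        case False
        then have "m = k - 1" using \<open>m<k\<close> by simp
        then show ?thesis using nth[of m] nth[of "Suc m"] m xz k by simp
      qed
    next
      case False
      then show ?thesis using nth[of m] nth[of "Suc m"] m adjw len by simp
    qed
  qed
  have oys: "\<forall>m. 0<m \<and> Suc m<length ys \<longrightarrow> ok E C (ys!(m-1)) (ys!m) (ys!Suc m)"
  proof (intro allI impI)
    fix m assume m: "0<m \<and> Suc m<length ys"
    consider "Suc m < k" | "m = k - 1" | "m = k" | "k < m" by linarith
    then show "ok E C (ys!(m-1)) (ys!m) (ys!Suc m)"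
    proof cases
      case 1
      have "ys!(m-1) = xs!(m-1)" "ys!m = xs!m" "ys!Suc m = xs!Suc m"
        using nth[of "m-1"] nth[of m] nth[of "Suc m"] m 1 by auto
      moreover have "ok E C (xs!(m-1)) (xs!m) (xs!Suc m)" using opn[rule_format, of m] m len by linarith
      ultimately show ?thesis by simp
    next
      case 2
      then have "2 \<le> k" using m by simp
      then have "ok E C (xs!(k-2)) (xs!(k-1)) (xs!Suc k)" using J1 by simp
      moreover have "ys!(m-1) = xs!(k-2)" "ys!m = xs!(k-1)" "ys!Suc m = xs!Suc k"
        using nth[of "m-1"] nth[of m] nth[of "Suc m"] m 2 by (auto simp: numeral_2_eq_2)
      ultimately show ?thesis by simp
    next
      case 3
      then have "Suc (Suc k) < ?n" using m len by linarith
      then have "ok E C (xs!(k-1)) (xs!Suc k) (xs!Suc (Suc k))" using J2 by simp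
      moreover have "ys!(m-1) = xs!(k-1)" "ys!m = xs!Suc k" "ys!Suc m = xs!Suc (Suc k)"
        using nth[of "m-1"] nth[of m] nth[of "Suc m"] m 3 k by auto
      ultimately show ?thesis by simp
    next
      case 4
      have "ok E C (xs!(Suc m-1)) (xs!Suc m) (xs!Suc (Suc m))" using opn[rule_format, of "Suc m"] m len by linarith
      moreover have "ys!(m-1) = xs!m" "ys!m = xs!Suc m" "ys!Suc m = xs!Suc (Suc m)"
        using nth[of "m-1"] nth[of m] nth[of "Suc m"] m 4 by auto
      ultimately show ?thesis by simp
    qed
  qed
  have "is_path E a b ys" using wys dys by (simp add: is_path_walk)
  moreover have "active_path E C ys" using oys unfolding active_ok by blast
  moreover have "length ys < ?n" using len k by simp
  ultimately show ?thesis by blast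
qed



lemma ok_cong: "ok E C w x y \<Longrightarrow> ((y,x)\<in>E \<longleftrightarrow> (z,x)\<in>E) \<Longrightarrow> ok E C w x z"
  unfolding ok_def by simp

lemma anc: "(p,q)\<in>E \<Longrightarrow> \<exists>c\<in>C. (q,c)\<in>E\<^sup>* \<Longrightarrow> \<exists>c\<in>C. (p,c)\<in>E\<^sup>*"
  by (meson converse_rtrancl_into_rtrancl)

lemma min_shielded:
  assumes ac: "acyclic E" and p: "is_path E a b xs" and a: "active_path E C xs"
    and mn: "\<forall>ys. is_path E a b ys \<and> active_path E C ys \<longrightarrow> length xs \<le> length ys"
    and k: "0<k" "Suc k < length xs" and xz: "adj E (xs!(k-1)) (xs!Suc k)"
  shows "(xs!k, xs!(k-1))\<in>E \<and> (xs!k, xs!Suc k)\<in>E \<and>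
    ((xs!(k-1), xs!Suc k)\<in>E \<longrightarrow> 2 \<le> k \<and> (xs!(k-2), xs!(k-1))\<in>E \<and> xs!(k-1) \<in> C) \<and>
    ((xs!Suc k, xs!(k-1))\<in>E \<longrightarrow> Suc (Suc k) < length xs \<and> (xs!Suc (Suc k), xs!Suc k)\<in>E \<and> xs!Suc k \<in> C)"
proof -
  let ?n = "length xs"
  have w: "walk E a b xs" using p by (simp add: is_path_walk)
  have adjw: "\<forall>i. Suc i < ?n \<longrightarrow> adj E (xs!i) (xs!Suc i)" using w unfolding walk_def by blast
  have opn: "\<forall>i. 0<i \<and> Suc i<?n \<longrightarrow> ok E C (xs!(i-1)) (xs!i) (xs!Suc i)"
    using a unfolding active_ok by blast
  define x y z where "x = xs!(k-1)" and "y = xs!k" and "z = xs!Suc k"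
  define w' u where "w' = xs!(k-2)" and "u = xs!Suc(Suc k)"
  have noJ: "\<not> ((2 \<le> k \<longrightarrow> ok E C w' x z) \<and> (Suc (Suc k) < ?n \<longrightarrow> ok E C x z u))"
  proof
    assume "(2 \<le> k \<longrightarrow> ok E C w' x z) \<and> (Suc (Suc k) < ?n \<longrightarrow> ok E C x z u)"
    then obtain ys where "is_path E a b ys" "active_path E C ys" "length ys < ?n"
      using remove_one[OF p a k xz] unfolding x_def z_def w'_def u_def by blast
    then show False using mn by (meson leD)
  qed
  have okk: "ok E C x y z" using opn[rule_format, of k] k unfolding x_def y_def z_def by simp
  have ok1: "2 \<le> k \<longrightarrow> ok E C w' x y"
  proof
    assume "2 \<le> k"
    then have "ok E C (xs!(k-1-1)) (xs!(k-1)) (xs!Suc (k-1))" using opn[rule_format, of "k-1"] k by simp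
    moreover have "k-1-1 = k-2" "Suc (k-1) = k" using k by auto
    ultimately show "ok E C w' x y" unfolding w'_def x_def y_def by simp
  qed
  have ok2: "Suc (Suc k) < ?n \<longrightarrow> ok E C y z u"
    using opn[rule_format, of "Suc k"] k unfolding y_def z_def u_def by simp
  have axy: "adj E x y"
  proof -
    have "Suc (k-1) < ?n" "Suc (k-1) = k" using k by auto
    then show ?thesis using adjw unfolding x_def y_def by metis
  qed
  have ayz: "adj E y z" using adjw[rule_format, of k] k unfolding y_def z_def by simp
  have axz: "adj E x z" using xz unfolding x_def z_def .
  have no2: "\<And>p q. (p,q)\<in>E \<Longrightarrow> (q,p)\<in>E \<Longrightarrow> False" by (rule acyc2[OF ac])
  have no3: "\<And>p q r. (p,q)\<in>E \<Longrightarrow> (q,r)\<in>E \<Longrightarrow> (r,p)\<in>E \<Longrightarrow> False" by (rule acyc3[OF ac])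
  have J1s: "((y,x)\<in>E \<longleftrightarrow> (z,x)\<in>E) \<Longrightarrow> (2 \<le> k \<longrightarrow> ok E C w' x z)"
  proof
    assume eq: "(y,x)\<in>E \<longleftrightarrow> (z,x)\<in>E" and "2 \<le> k"
    then have "ok E C w' x y" using ok1 by simp
    then show "ok E C w' x z" using eq by (rule ok_cong)
  qed
  have J2s: "((y,z)\<in>E \<longleftrightarrow> (x,z)\<in>E) \<Longrightarrow> (Suc (Suc k) < ?n \<longrightarrow> ok E C x z u)"
  proof
    assume eq: "(y,z)\<in>E \<longleftrightarrow> (x,z)\<in>E" and "Suc (Suc k) < ?n"
    then have "ok E C u z y" using ok2 by (simp add: ok_sym)
    then have "ok E C u z x" using eq by (rule ok_cong)
    then show "ok E C x z u" by (simp add: ok_sym)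
  qed
  have fork: "(y,x)\<in>E \<and> (y,z)\<in>E"
  proof (rule ccontr)
    assume nf: "\<not> ?thesis"
    consider "(x,y)\<in>E" "(z,y)\<in>E" | "(x,y)\<in>E" "(y,z)\<in>E" | "(z,y)\<in>E" "(y,x)\<in>E"
      using nf axy ayz unfolding adj_def by blast
    then show False
    proof cases
      case 1
      have Any: "\<exists>c\<in>C. (y,c)\<in>E\<^sup>*" using okk 1 unfolding ok_def by blast
      show False
      proof (cases "(x,z)\<in>E")
        case True
        have "(z,x)\<notin>E" using True no2 by blast
        moreover have "(y,x)\<notin>E" using 1 no2 by blast
        ultimately have "(y,x)\<in>E \<longleftrightarrow> (z,x)\<in>E" by blast
        then have j1: "2 \<le> k \<longrightarrow> ok E C w' x z" by (rule J1s)
        have j2: "Suc (Suc k) < ?n \<longrightarrow> ok E C x z u"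
        proof
          assume "Suc (Suc k) < ?n"
          then have o: "ok E C y z u" using ok2 by blast
          have "(y,z)\<notin>E" using 1 no2 by blast
          then have zC: "z \<notin> C" using o unfolding ok_def by blast
          have "\<exists>c\<in>C. (z,c)\<in>E\<^sup>*" using anc[OF 1(2) Any] .
          then show "ok E C x z u" using zC unfolding ok_def by blast
        qed
        show False using noJ j1 j2 by blast
      next
        case False
        then have zx: "(z,x)\<in>E" using axz unfolding adj_def by blast
        have "(x,z)\<notin>E" using zx no2 by blast
        moreover have "(y,z)\<notin>E" using 1 no2 by blast
        ultimately have "(y,z)\<in>E \<longleftrightarrow> (x,z)\<in>E" by blast
        then have j2: "Suc (Suc k) < ?n \<longrightarrow> ok E C x z u" by (rule J2s)
        have j1: "2 \<le> k \<longrightarrow> ok E C w' x z"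
        proof
          assume "2 \<le> k"
          then have o: "ok E C w' x y" using ok1 by blast
          have "(y,x)\<notin>E" using 1 no2 by blast
          then have xC: "x \<notin> C" using o unfolding ok_def by blast
          have "\<exists>c\<in>C. (x,c)\<in>E\<^sup>*" using anc[OF 1(1) Any] .
          then show "ok E C w' x z" using xC unfolding ok_def by blast
        qed
        show False using noJ j1 j2 by blast
      qed
    next
      case 2
      have "(x,z)\<in>E" using 2 axz no3 unfolding adj_def by blast
      then have "(z,x)\<notin>E" using no2 by blast
      moreover have "(y,x)\<notin>E" using 2 no2 by blast
      ultimately have "(y,x)\<in>E \<longleftrightarrow> (z,x)\<in>E" by blast
      then have j1: "2 \<le> k \<longrightarrow> ok E C w' x z" by (rule J1s)
      have j2: "Suc (Suc k) < ?n \<longrightarrow> ok E C x z u" by (rule J2s) (use 2 \<open>(x,z)\<in>E\<close> in blast)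
      show False using noJ j1 j2 by blast
    next
      case 3
      have "(z,x)\<in>E" using 3 axz no3 unfolding adj_def by blast
      then have "(x,z)\<notin>E" using no2 by blast
      moreover have "(y,z)\<notin>E" using 3 no2 by blast
      ultimately have "(y,z)\<in>E \<longleftrightarrow> (x,z)\<in>E" by blast
      then have j2: "Suc (Suc k) < ?n \<longrightarrow> ok E C x z u" by (rule J2s)
      have j1: "2 \<le> k \<longrightarrow> ok E C w' x z" by (rule J1s) (use 3 \<open>(z,x)\<in>E\<close> in blast)
      show False using noJ j1 j2 by blast
    qed
  qed
  have c1: "(x,z)\<in>E \<longrightarrow> 2 \<le> k \<and> (w',x)\<in>E \<and> x \<in> C"
  proof
    assume xz': "(x,z)\<in>E"
    have j2: "Suc (Suc k) < ?n \<longrightarrow> ok E C x z u" by (rule J2s) (use fork xz' in blast)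
    then have nj1: "\<not> (2 \<le> k \<longrightarrow> ok E C w' x z)" using noJ by blast
    then have k2: "2 \<le> k" and nok: "\<not> ok E C w' x z" by auto
    have o: "ok E C w' x y" using ok1 k2 by blast
    have "(z,x)\<notin>E" using xz' no2 by blast
    then have xC: "x \<in> C" using nok unfolding ok_def by blast
    then have "(w',x)\<in>E" using o fork unfolding ok_def by blast
    then show "2 \<le> k \<and> (w',x)\<in>E \<and> x \<in> C" using k2 xC by blast
  qed
  have c2: "(z,x)\<in>E \<longrightarrow> Suc (Suc k) < ?n \<and> (u,z)\<in>E \<and> z \<in> C"
  proof
    assume zx': "(z,x)\<in>E"
    have j1: "2 \<le> k \<longrightarrow> ok E C w' x z" by (rule J1s) (use fork zx' in blast)
    then have "\<not> (Suc (Suc k) < ?n \<longrightarrow> ok E C x z u)" using noJ by blast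
    then have k2: "Suc (Suc k) < ?n" and nok: "\<not> ok E C x z u" by auto
    have o: "ok E C y z u" using ok2 k2 by blast
    have "(x,z)\<notin>E" using zx' no2 by blast
    then have zC: "z \<in> C" using nok unfolding ok_def by blast
    then have "(u,z)\<in>E" using o fork unfolding ok_def by blast
    then show "Suc (Suc k) < ?n \<and> (u,z)\<in>E \<and> z \<in> C" using k2 zC by blast
  qed
  show ?thesis using fork c1 c2 by (simp only: x_def y_def z_def w'_def u_def)
qed

lemma min_collider_unshielded:
  assumes ac: "acyclic E" and p: "is_path E a b xs" and a: "active_path E C xs"
    and mn: "\<forall>ys. is_path E a b ys \<and> active_path E C ys \<longrightarrow> length xs \<le> length ys"
    and k: "0<k" "Suc k < length xs" and col: "(xs!(k-1), xs!k)\<in>E"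
  shows "\<not> adj E (xs!(k-1)) (xs!Suc k)"
  using min_shielded[OF ac p a mn k] col acyc2[OF ac] by blast



definition vs :: "('a \<times> 'a) set \<Rightarrow> 'a \<Rightarrow> 'a \<Rightarrow> 'a \<Rightarrow> bool" where
  "vs E p q r \<longleftrightarrow> (p,q)\<in>E \<and> (r,q)\<in>E \<and> p \<noteq> r \<and> \<not> adj E p r"

definition D :: "('a \<times> 'a) set \<Rightarrow> 'a set \<Rightarrow> nat \<Rightarrow> 'a \<Rightarrow> bool" where
  "D E Z k c \<longleftrightarrow> (\<exists>w\<in>Z. (c,w) \<in> E ^^ k)"

lemma D_Suc: "(u,c)\<in>E \<Longrightarrow> D E Z k c \<Longrightarrow> D E Z (Suc k) u"
  unfolding D_def using relpow_Suc_I2 by fast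

lemma D_SucE: "D E Z (Suc k) c \<Longrightarrow> \<exists>d. (c,d)\<in>E \<and> D E Z k d"
  unfolding D_def using relpow_Suc_D2 by fast

lemma D_0: "D E Z 0 c \<longleftrightarrow> c \<in> Z"
  unfolding D_def by simp

lemma min_status:
  assumes acE: "acyclic E" and acF: "acyclic F" and adjeq: "\<And>p q. adj F p q \<longleftrightarrow> adj E p q"
    and vseq: "\<And>p q r. vs E p q r \<longleftrightarrow> vs F p q r"
    and p: "is_path E a b xs" and a: "active_path E C xs"
    and mn: "\<forall>ys. is_path E a b ys \<and> active_path E C ys \<longrightarrow> length xs \<le> length ys"
    and k: "0<k" "Suc k < length xs"
  shows "((xs!(k-1), xs!k)\<in>F \<and> (xs!Suc k, xs!k)\<in>F) \<longleftrightarrow> ((xs!(k-1), xs!k)\<in>E \<and> (xs!Suc k, xs!k)\<in>E)"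
proof -
  let ?n = "length xs"
  have dx: "distinct xs" using p by (simp add: is_path_walk)
  have ne: "\<And>i j. i < ?n \<Longrightarrow> j < ?n \<Longrightarrow> i \<noteq> j \<Longrightarrow> xs!i \<noteq> xs!j"
    using dx nth_eq_iff_index_eq by blast
  have xz: "xs!(k-1) \<noteq> xs!Suc k" using ne k by simp
  show ?thesis
  proof (cases "adj E (xs!(k-1)) (xs!Suc k)")
    case False
    have "vs E (xs!(k-1)) (xs!k) (xs!Suc k) \<longleftrightarrow> vs F (xs!(k-1)) (xs!k) (xs!Suc k)" by (rule vseq)
    moreover have "\<not> adj F (xs!(k-1)) (xs!Suc k)" using False by (simp add: adjeq)
    ultimately show ?thesis using False xz unfolding vs_def by blast
  next
    case True
    note ms = min_shielded[OF acE p a mn k True]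
    have rhs: "\<not> ((xs!(k-1), xs!k)\<in>E \<and> (xs!Suc k, xs!k)\<in>E)" using ms acyc2[OF acE] by blast
    have lhs: "\<not> ((xs!(k-1), xs!k)\<in>F \<and> (xs!Suc k, xs!k)\<in>F)"
    proof
      assume colF: "(xs!(k-1), xs!k)\<in>F \<and> (xs!Suc k, xs!k)\<in>F"
      consider "(xs!(k-1), xs!Suc k)\<in>E" | "(xs!Suc k, xs!(k-1))\<in>E" using True unfolding adj_def by blast
      then show False
      proof cases
        case 1
        then have k2: "2 \<le> k" and wx: "(xs!(k-2), xs!(k-1))\<in>E" using ms by auto
        have k1: "0 < k-1" "Suc (k-1) < ?n" using k k2 by auto
        have e1: "xs!(k-1-1) = xs!(k-2)" "xs!Suc (k-1) = xs!k" using k k2 by (auto simp: numeral_2_eq_2)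
        have "(xs!(k-1-1), xs!(k-1))\<in>E" using wx e1 by simp
        then have "\<not> adj E (xs!(k-1-1)) (xs!Suc (k-1))"
          by (rule min_collider_unshielded[OF acE p a mn k1])
        then have nadj: "\<not> adj E (xs!(k-2)) (xs!k)" using e1 by simp
        have "xs!(k-2) \<noteq> xs!k" using ne k k2 by simp
        then have "vs E (xs!(k-2)) (xs!(k-1)) (xs!k)" using wx ms nadj unfolding vs_def by blast
        then have "vs F (xs!(k-2)) (xs!(k-1)) (xs!k)" by (simp add: vseq)
        then have "(xs!k, xs!(k-1))\<in>F" unfolding vs_def by blast
        then show False using colF acyc2[OF acF] by blast
      next
        case 2
        then have k2: "Suc (Suc k) < ?n" and uz: "(xs!Suc (Suc k), xs!Suc k)\<in>E" using ms by auto
        have k1: "0 < Suc k" "Suc (Suc k) < ?n" using k2 by auto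
        have "(xs!(Suc k-1), xs!Suc k)\<in>E" using ms by simp
        then have "\<not> adj E (xs!(Suc k-1)) (xs!Suc (Suc k))"
          by (rule min_collider_unshielded[OF acE p a mn k1])
        then have nadj: "\<not> adj E (xs!k) (xs!Suc (Suc k))" by simp
        have "xs!k \<noteq> xs!Suc (Suc k)" using ne k2 by simp
        then have "vs E (xs!k) (xs!Suc k) (xs!Suc (Suc k))" using uz ms nadj unfolding vs_def by blast
        then have "vs F (xs!k) (xs!Suc k) (xs!Suc (Suc k))" by (simp add: vseq)
        then have "(xs!k, xs!Suc k)\<in>F" unfolding vs_def by blast
        then show False using colF acyc2[OF acF] by blast
      qed
    qed
    show ?thesis using lhs rhs by blast
  qed
qed

lemma fwdH:
  assumes acE: "acyclic E" and acF: "acyclic F" and adjeq: "\<And>p q. adj F p q \<longleftrightarrow> adj E p q"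
    and vseq: "\<And>p q r. vs E p q r \<longleftrightarrow> vs F p q r"
  shows "(u,c)\<in>E \<Longrightarrow> (u,c)\<in>F \<Longrightarrow> D E Z k c \<Longrightarrow> (\<forall>m\<le>k. \<not> D E Z m u) \<Longrightarrow> \<exists>w\<in>Z. (c,w)\<in>F\<^sup>*"
proof (induction k arbitrary: u c)
  case 0
  then show ?case by (auto simp: D_0)
next
  case (Suc k)
  obtain d where cd: "(c,d)\<in>E" and Dd: "D E Z k d" using D_SucE[OF Suc.prems(3)] by blast
  have "adj E c d" using cd by (simp add: adj_def)
  then have "adj F c d" by (simp add: adjeq)
  have cdF: "(c,d)\<in>F"
  proof (rule ccontr)
    assume "(c,d)\<notin>F"
    then have dc: "(d,c)\<in>F" using \<open>adj F c d\<close> unfolding adj_def by blast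
    have ud: "u \<noteq> d" using Suc.prems(1) cd acyc2[OF acE] by blast
    have "\<not> adj E u d"
    proof
      assume "adj E u d"
      then consider "(u,d)\<in>E" | "(d,u)\<in>E" unfolding adj_def by blast
      then show False
      proof cases
        case 1 then have "D E Z (Suc k) u" using D_Suc[OF _ Dd] by blast
        then show False using Suc.prems(4) by blast
      next
        case 2 then show False using acyc3[OF acE Suc.prems(1) cd] by blast
      qed
    qed
    then have "\<not> adj F u d" by (simp add: adjeq)
    then have "vs F u c d" using Suc.prems(2) dc ud unfolding vs_def by blast
    then have "vs E u c d" by (simp add: vseq)
    then have "(d,c)\<in>E" unfolding vs_def by blast
    then show False using cd acyc2[OF acE] by blast
  qed
  have "\<forall>m\<le>k. \<not> D E Z m c"
  proof (intro allI impI notI)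
    fix m assume "m \<le> k" "D E Z m c"
    then have "D E Z (Suc m) u" using D_Suc[OF Suc.prems(1)] by blast
    then show False using Suc.prems(4) \<open>m \<le> k\<close> by (meson Suc_le_mono)
  qed
  then have "\<exists>w\<in>Z. (d,w)\<in>F\<^sup>*" using Suc.IH[OF cd cdF Dd] by blast
  then show ?case using anc[OF cdF] by blast
qed

lemma reroute:
  assumes acE: "acyclic E" and acF: "acyclic F" and adjeq: "\<And>p q. adj F p q \<longleftrightarrow> adj E p q"
    and vseq: "\<And>p q r. vs E p q r \<longleftrightarrow> vs F p q r"
    and xy: "x \<noteq> y" "\<not> adj E x y"
  shows "(x,c)\<in>E \<Longrightarrow> (y,c)\<in>E \<Longrightarrow> (x,c)\<in>F \<Longrightarrow> (y,c)\<in>F \<Longrightarrow> D E Z k c \<Longrightarrow> (\<forall>m<k. \<not> D E Z m c)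
     \<Longrightarrow> \<exists>c'. (x,c')\<in>F \<and> (y,c')\<in>F \<and> (\<exists>w\<in>Z. (c',w)\<in>F\<^sup>*)"
proof (induction k arbitrary: c)
  case 0
  then show ?case by (auto simp: D_0)
next
  case (Suc k)
  obtain d where cd: "(c,d)\<in>E" and Dd: "D E Z k d" using D_SucE[OF Suc.prems(5)] by blast
  have "adj E c d" using cd by (simp add: adj_def)
  then have "adj F c d" by (simp add: adjeq)
  show ?case
  proof (cases "(c,d)\<in>F")
    case True
    have "\<forall>m\<le>k. \<not> D E Z m c" using Suc.prems(6) by auto
    then have "\<exists>w\<in>Z. (d,w)\<in>F\<^sup>*" using fwdH[OF acE acF adjeq vseq cd True Dd] by blast
    then have "\<exists>w\<in>Z. (c,w)\<in>F\<^sup>*" using anc[OF True] by blast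
    then show ?thesis using Suc.prems(3,4) by blast
  next
    case False
    then have dc: "(d,c)\<in>F" using \<open>adj F c d\<close> unfolding adj_def by blast
    have par: "(v,d)\<in>E" if v: "(v,c)\<in>E" "(v,c)\<in>F" for v
    proof -
      have vd: "v \<noteq> d" using v cd acyc2[OF acE] by blast
      have "adj E v d"
      proof (rule ccontr)
        assume "\<not> adj E v d"
        then have "\<not> adj F v d" by (simp add: adjeq)
        then have "vs F v c d" using v dc vd unfolding vs_def by blast
        then have "vs E v c d" by (simp add: vseq)
        then have "(d,c)\<in>E" unfolding vs_def by blast
        then show False using cd acyc2[OF acE] by blast
      qed
      then show "(v,d)\<in>E" using acyc3[OF acE v(1) cd] unfolding adj_def by blast
    qed
    have xd: "(x,d)\<in>E" using par[OF Suc.prems(1,3)] by blast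
    have yd: "(y,d)\<in>E" using par[OF Suc.prems(2,4)] by blast
    have "vs E x d y" using xd yd xy unfolding vs_def by blast
    then have "vs F x d y" by (simp add: vseq)
    then have xdF: "(x,d)\<in>F" and ydF: "(y,d)\<in>F" unfolding vs_def by blast+
    have "\<forall>m<k. \<not> D E Z m d"
    proof (intro allI impI notI)
      fix m assume "m < k" "D E Z m d"
      then have "D E Z (Suc m) c" using D_Suc[OF cd] by blast
      then show False using Suc.prems(6) \<open>m < k\<close> by auto
    qed
    then show ?thesis using Suc.IH[OF xd yd xdF ydF Dd] by blast
  qed
qed



lemma transfer:
  assumes acE: "acyclic E" and acF: "acyclic F" and adjeq: "\<And>p q. adj F p q \<longleftrightarrow> adj E p q"
    and vseq: "\<And>p q r. vs E p q r \<longleftrightarrow> vs F p q r"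
    and p0: "is_path E a b xs0" and a0: "active_path E C xs0"
  shows "\<exists>ys. is_path F a b ys \<and> active_path F C ys"
proof -
  obtain xs where p: "is_path E a b xs" and a: "active_path E C xs"
    and mn: "\<forall>ys. is_path E a b ys \<and> active_path E C ys \<longrightarrow> length xs \<le> length ys"
    using ex_has_least_nat[of "\<lambda>xs. is_path E a b xs \<and> active_path E C xs" xs0 length] p0 a0 by blast
  let ?n = "length xs"
  have w: "walk E a b xs" and dx: "distinct xs" using p by (simp_all add: is_path_walk)
  have adjw: "\<forall>i. Suc i < ?n \<longrightarrow> adj E (xs!i) (xs!Suc i)" using w unfolding walk_def by blast
  have x0: "xs!0 = a" and yl: "xs!(?n-1) = b" and n2: "?n \<ge> 2" using w unfolding walk_def by auto
  have opn: "\<forall>i. 0<i \<and> Suc i<?n \<longrightarrow> ok E C (xs!(i-1)) (xs!i) (xs!Suc i)"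
    using a unfolding active_ok by blast
  have ne: "\<And>i j. i < ?n \<Longrightarrow> j < ?n \<Longrightarrow> i \<noteq> j \<Longrightarrow> xs!i \<noteq> xs!j"
    using dx nth_eq_iff_index_eq by blast
  define col where "col k \<longleftrightarrow> 0<k \<and> Suc k < ?n \<and> (xs!(k-1),xs!k)\<in>E \<and> (xs!Suc k, xs!k)\<in>E" for k
  define good where "good k c \<longleftrightarrow> (xs!(k-1),c)\<in>F \<and> (xs!Suc k,c)\<in>F \<and> (\<exists>w\<in>C. (c,w)\<in>F\<^sup>*)" for k c
  have R: "\<exists>c. good k c" if ck: "col k" for k
  proof -
    have k: "0<k" "Suc k < ?n" and eE: "(xs!(k-1),xs!k)\<in>E" "(xs!Suc k, xs!k)\<in>E"
      using ck unfolding col_def by auto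
    have eF: "(xs!(k-1),xs!k)\<in>F" "(xs!Suc k, xs!k)\<in>F"
      using min_status[OF acE acF adjeq vseq p a mn k] eE by blast+
    have "ok E C (xs!(k-1)) (xs!k) (xs!Suc k)" using opn k by blast
    then obtain w0 where "w0\<in>C" "(xs!k,w0)\<in>E\<^sup>*" using eE unfolding ok_def by blast
    then obtain j0 where "(xs!k,w0)\<in>E^^j0" using rtrancl_power by blast
    then have "D E C j0 (xs!k)" unfolding D_def using \<open>w0\<in>C\<close> by blast
    then obtain j where Dj: "D E C j (xs!k)" and jm: "\<forall>i. D E C i (xs!k) \<longrightarrow> j \<le> i"
      using ex_has_least_nat[of "\<lambda>j. D E C j (xs!k)" j0 "\<lambda>x. x"] by blast
    have jm': "\<forall>m<j. \<not> D E C m (xs!k)" using jm by (meson leD)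
    have xy: "xs!(k-1) \<noteq> xs!Suc k" using ne k by simp
    have nadj: "\<not> adj E (xs!(k-1)) (xs!Suc k)"
      by (rule min_collider_unshielded[OF acE p a mn k eE(1)])
    show ?thesis
      using reroute[OF acE acF adjeq vseq xy nadj eE eF Dj jm'] unfolding good_def by blast
  qed
  define f where "f k = (SOME c. good k c)" for k
  have fg: "good k (f k)" if "col k" for k
    using someI_ex[OF R[OF that]] unfolding f_def .
  define ys where "ys = map (\<lambda>k. if col k then f k else xs!k) [0..<?n]"
  have ysl: "length ys = ?n" unfolding ys_def by simp
  have ysn: "ys!k = (if col k then f k else xs!k)" if "k < ?n" for k
    using that unfolding ys_def by simp
  have nc2: "\<not> col (Suc k)" if "col k" for k
    using that acyc2[OF acE] unfolding col_def by auto
  have nc0: "\<not> col 0" unfolding col_def by simp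
  have ncl: "\<not> col (?n - 1)"
  proof -
    have "\<not> Suc (?n-1) < ?n" using n2 by simp
    then show ?thesis unfolding col_def by blast
  qed
  have ab: "a \<noteq> b"
  proof -
    have "0 < ?n" "?n - 1 < ?n" "0 \<noteq> ?n - 1" using n2 by auto
    then have "xs!0 \<noteq> xs!(?n-1)" using ne by blast
    then show ?thesis using x0 yl by simp
  qed
  have wys: "walk F a b ys"
    unfolding walk_def
  proof (intro conjI allI impI)
    show "2 \<le> length ys" using ysl n2 by simp
    have "0 < ?n" "?n - 1 < ?n" using n2 by auto
    then show "ys!0 = a" "ys!(length ys - 1) = b" using ysn nc0 x0 ncl yl ysl by simp_all
    fix k assume k: "Suc k < length ys"
    show "adj F (ys!k) (ys!Suc k)"
    proof (cases "col k")
      case True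
      then have "ys!k = f k" "ys!Suc k = xs!Suc k" using ysn k ysl nc2 by auto
      moreover have "(xs!Suc k, f k)\<in>F" using fg[OF True] unfolding good_def by blast
      ultimately show ?thesis unfolding adj_def by simp
    next
      case False
      show ?thesis
      proof (cases "col (Suc k)")
        case True
        then have "ys!k = xs!k" "ys!Suc k = f (Suc k)" using ysn k ysl False by auto
        moreover have "(xs!k, f (Suc k))\<in>F" using fg[OF True] unfolding good_def by simp
        ultimately show ?thesis unfolding adj_def by simp
      next
        case False2: False
        then have "ys!k = xs!k" "ys!Suc k = xs!Suc k" using ysn k ysl False by auto
        moreover have "adj E (xs!k) (xs!Suc k)" using adjw k ysl by simp
        ultimately show ?thesis by (simp add: adjeq)
      qed
    qed
  qed
  have oys: "\<forall>k. 0<k \<and> Suc k<length ys \<longrightarrow> ok F C (ys!(k-1)) (ys!k) (ys!Suc k)"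
  proof (intro allI impI)
    fix k assume k: "0<k \<and> Suc k<length ys"
    have ncm: "\<not> col (k-1)" if "col k"
    proof
      assume c: "col (k-1)"
      have "Suc (k-1) = k" using k by simp
      then show False using nc2[OF c] that by simp
    qed
    show "ok F C (ys!(k-1)) (ys!k) (ys!Suc k)"
    proof (cases "col k")
      case True
      have e: "ys!(k-1) = xs!(k-1)" "ys!k = f k" "ys!Suc k = xs!Suc k"
        using ysn[of "k-1"] ysn[of k] ysn[of "Suc k"] k ysl True nc2 ncm by auto
      have "good k (f k)" using fg[OF True] .
      then show ?thesis unfolding e good_def ok_def by blast
    next
      case False
      have yk: "ys!k = xs!k" using ysn[of k] k ysl False by simp
      have notE: "\<not> ((xs!(k-1),xs!k)\<in>E \<and> (xs!Suc k, xs!k)\<in>E)" using False k ysl unfolding col_def by auto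
      have okk: "ok E C (xs!(k-1)) (xs!k) (xs!Suc k)" using opn k ysl by simp
      then have nC: "xs!k \<notin> C" using notE unfolding ok_def by blast
      have kk: "0<k" "Suc k < ?n" using k ysl by auto
      have notF: "\<not> ((xs!(k-1),xs!k)\<in>F \<and> (xs!Suc k, xs!k)\<in>F)"
        using min_status[OF acE acF adjeq vseq p a mn kk] notE by blast
      have l: "(ys!(k-1), xs!k)\<in>F \<Longrightarrow> (xs!(k-1), xs!k)\<in>F"
      proof -
        assume h: "(ys!(k-1), xs!k)\<in>F"
        show "(xs!(k-1), xs!k)\<in>F"
        proof (cases "col (k-1)")
          case True
          have "Suc (k-1) = k" using k by simp
          then have "(xs!k, f (k-1))\<in>F" using fg[OF True] unfolding good_def by simp
          moreover have "ys!(k-1) = f (k-1)" using ysn[of "k-1"] True kk by simp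
          ultimately have False using h acyc2[OF acF] by metis
          then show ?thesis ..
        next
          case False
          then show ?thesis using h ysn[of "k-1"] kk by simp
        qed
      qed
      have r: "(ys!Suc k, xs!k)\<in>F \<Longrightarrow> (xs!Suc k, xs!k)\<in>F"
      proof -
        assume h: "(ys!Suc k, xs!k)\<in>F"
        show "(xs!Suc k, xs!k)\<in>F"
        proof (cases "col (Suc k)")
          case True
          then have "(xs!k, f (Suc k))\<in>F" using fg[OF True] unfolding good_def by simp
          moreover have "ys!Suc k = f (Suc k)" using ysn[of "Suc k"] True kk by simp
          ultimately have False using h acyc2[OF acF] by metis
          then show ?thesis ..
        next
          case False
          then show ?thesis using h ysn[of "Suc k"] kk by simp
        qed
      qed
      have "\<not> ((ys!(k-1), ys!k)\<in>F \<and> (ys!Suc k, ys!k)\<in>F)" unfolding yk using l r notF by blast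
      then show ?thesis using nC yk unfolding ok_def by auto
    qed
  qed
  show ?thesis using shortcut[OF acF ab wys oys] .
qed



lemma path3: "adj E p q \<Longrightarrow> adj E q r \<Longrightarrow> distinct [p,q,r] \<Longrightarrow> is_path E p r [p,q,r]"
  unfolding is_path_def by (auto simp: less_Suc_eq)

lemma active3: "active_path E C [p,q,r] \<longleftrightarrow> ok E C p q r"
  unfolding active_ok by (auto simp: less_Suc_eq)

lemma path2: "adj E p r \<Longrightarrow> p \<noteq> r \<Longrightarrow> is_path E p r [p,r]"
  unfolding is_path_def by (auto simp: less_Suc_eq)

lemma active2: "active_path E C [p,r]"
  unfolding active_ok by auto

lemma JG_dsep: "({p},{r},C) \<in> J_G V E \<Longrightarrow> is_path E p r xs \<Longrightarrow> active_path E C xs \<Longrightarrow> False"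
  unfolding J_G_def d_separated_def by blast

lemma vs_equiv:
  assumes dE: "dag V E" and dF: "dag V F" and adjeq: "\<And>p q. adj F p q \<longleftrightarrow> adj E p q"
    and JJ: "J_G V E \<subseteq> J_G V F"
  shows "vs E p q r \<longleftrightarrow> vs F p q r"
proof
  have acE: "acyclic E" and EV: "E \<subseteq> V \<times> V" using dE unfolding dag_def by auto
  have acF: "acyclic F" and FV: "F \<subseteq> V \<times> V" using dF unfolding dag_def by auto
  assume h: "vs E p q r"
  then have pq: "(p,q)\<in>E" and rq: "(r,q)\<in>E" and pr: "p \<noteq> r" and na: "\<not> adj E p r"
    unfolding vs_def by auto
  have V: "p\<in>V" "r\<in>V" using pq rq EV by auto
  obtain C where J: "({p},{r},C)\<in>J_G V E" and Cp: "\<forall>w\<in>C. (w,p)\<in>E \<or> (w,r)\<in>E"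
    using sep_exists[OF dE V pr na] by blast
  have qC: "q \<notin> C" using Cp pq rq acyc2[OF acE] by blast
  have JF: "({p},{r},C)\<in>J_G V F" using J JJ by blast
  have "adj E p q" "adj E q r" using pq rq by (simp_all add: adj_def)
  then have "adj F p q" "adj F q r" by (simp_all add: adjeq)
  moreover have "distinct [p,q,r]" using pq rq pr acyc1[OF acE] by auto
  ultimately have P: "is_path F p r [p,q,r]" by (rule path3)
  have "(p,q)\<in>F \<and> (r,q)\<in>F"
  proof (rule ccontr)
    assume "\<not> ?thesis"
    then have "ok F C p q r" using qC unfolding ok_def by blast
    then have "active_path F C [p,q,r]" by (simp add: active3)
    then show False by (rule JG_dsep[OF JF P])
  qed
  moreover have "\<not> adj F p r" using na by (simp add: adjeq)
  ultimately show "vs F p q r" using pr unfolding vs_def by blast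
next
  have acE: "acyclic E" and EV: "E \<subseteq> V \<times> V" using dE unfolding dag_def by auto
  have acF: "acyclic F" and FV: "F \<subseteq> V \<times> V" using dF unfolding dag_def by auto
  assume h: "vs F p q r"
  then have pq: "(p,q)\<in>F" and rq: "(r,q)\<in>F" and pr: "p \<noteq> r" and naF: "\<not> adj F p r"
    unfolding vs_def by auto
  have na: "\<not> adj E p r" using naF by (simp add: adjeq)
  have V: "p\<in>V" "r\<in>V" using pq rq FV by auto
  obtain C where J: "({p},{r},C)\<in>J_G V E"
    using sep_exists[OF dE V pr na] by blast
  have JF: "({p},{r},C)\<in>J_G V F" using J JJ by blast
  have dq: "distinct [p,q,r]" using pq rq pr acyc1[OF acF] by auto
  have aF: "adj F p q" "adj F q r" using pq rq by (simp_all add: adj_def)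
  then have aE: "adj E p q" "adj E q r" by (simp_all add: adjeq)
  have "(p,q)\<in>E \<and> (r,q)\<in>E"
  proof (rule ccontr)
    assume nc: "\<not> ?thesis"
    show False
    proof (cases "q \<in> C")
      case False
      then have "ok E C p q r" using nc unfolding ok_def by blast
      then have "active_path E C [p,q,r]" by (simp add: active3)
      then show False by (rule JG_dsep[OF J path3[OF aE dq]])
    next
      case True
      then have "ok F C p q r" using pq rq unfolding ok_def by blast
      then have "active_path F C [p,q,r]" by (simp add: active3)
      then show False by (rule JG_dsep[OF JF path3[OF aF dq]])
    qed
  qed
  then show "vs E p q r" using pr na unfolding vs_def by blast
qed

lemma skel_adj: "{x,y} \<in> skel_G E \<longleftrightarrow> adj E x y"
  unfolding skel_G_def adj_def by (auto simp: doubleton_eq_iff insert_commute)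

lemma skel_img: "skel_G E = (\<lambda>(x,y). {x,y}) ` E"
  unfolding skel_G_def by auto

lemma card_skel:
  assumes ac: "acyclic E" shows "card (skel_G E) = card E"
proof -
  have "inj_on (\<lambda>(x,y). {x,y}) E"
  proof (rule inj_onI)
    fix a b assume a: "a\<in>E" and b: "b\<in>E" and eq: "(\<lambda>(x,y). {x,y}) a = (\<lambda>(x,y). {x,y}) b"
    obtain x y u v where ab: "a = (x,y)" "b = (u,v)" by fastforce
    then have "{x,y} = {u,v}" using eq by simp
    then have "(x = u \<and> y = v) \<or> (x = v \<and> y = u)" by (simp add: doubleton_eq_iff)
    then show "a = b"
    proof
      assume "x = v \<and> y = u"
      then have "(x,y)\<in>E" "(y,x)\<in>E" using a b ab by auto
      then show "a = b" using acyc2[OF ac] by blast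
    qed (use ab in simp)
  qed
  then show ?thesis unfolding skel_img by (rule card_image)
qed

lemma finite_dag: "dag V E \<Longrightarrow> finite E"
  unfolding dag_def by (meson finite_SigmaI finite_subset)

lemma card_skel_le: "finite E \<Longrightarrow> card (skel_G E) \<le> card E"
  unfolding skel_img by (rule card_image_le)

lemma finite_skel: "finite E \<Longrightarrow> finite (skel_G E)"
  unfolding skel_img by simp

lemma skel_sub:
  assumes dE: "dag V E" and dF: "dag V F" and JJ: "J_G V E \<subseteq> J_G V F"
  shows "skel_G F \<subseteq> skel_G E"
proof
  fix s assume "s \<in> skel_G F"
  then obtain x y where s: "s = {x,y}" and xy: "(x,y)\<in>F" unfolding skel_G_def by blast
  have V: "x\<in>V" "y\<in>V" using xy dF unfolding dag_def by auto
  have ne: "x \<noteq> y"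
  proof
    assume "x = y" then show False using xy acyc1[of F x] dF unfolding dag_def by simp
  qed
  have "adj E x y"
  proof (rule ccontr)
    assume "\<not> adj E x y"
    then obtain C where "({x},{y},C)\<in>J_G V E" using sep_exists[OF dE V ne] by blast
    then have "({x},{y},C)\<in>J_G V F" using JJ by blast
    moreover have "is_path F x y [x,y]" using xy ne by (intro path2) (simp_all add: adj_def)
    ultimately show False using JG_dsep active2 by fast
  qed
  then show "s \<in> skel_G E" unfolding s by (simp only: skel_adj)
qed

lemma ok_mono:
  assumes sub: "F \<subseteq> E" and ac: "acyclic E" and a1: "adj F u v" and a2: "adj F w v"
    and o: "ok F C u v w"
  shows "ok E C u v w"
proof -
  have e1: "(u,v)\<in>E \<longleftrightarrow> (u,v)\<in>F" using a1 sub acyc2[OF ac] unfolding adj_def by blast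
  have e2: "(w,v)\<in>E \<longleftrightarrow> (w,v)\<in>F" using a2 sub acyc2[OF ac] unfolding adj_def by blast
  have "F\<^sup>* \<subseteq> E\<^sup>*" using sub by (rule rtrancl_mono)
  then show ?thesis using o unfolding ok_def e1 e2 by blast
qed

lemma active_mono:
  assumes sub: "F \<subseteq> E" and ac: "acyclic E" and p: "is_path F a b xs" and act: "active_path F C xs"
  shows "is_path E a b xs \<and> active_path E C xs"
proof
  have adjw: "\<forall>i. Suc i < length xs \<longrightarrow> adj F (xs!i) (xs!Suc i)" using p unfolding is_path_def by blast
  show "is_path E a b xs" using p sub unfolding is_path_def adj_def by blast
  show "active_path E C xs" unfolding active_ok
  proof (intro allI impI)
    fix i assume i: "0<i \<and> Suc i < length xs"
    have "Suc (i-1) < length xs" "Suc (i-1) = i" using i by auto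
    then have "adj F (xs!(i-1)) (xs!i)" using adjw by metis
    moreover have "adj F (xs!i) (xs!Suc i)" using adjw i by blast
    then have "adj F (xs!Suc i) (xs!i)" by (simp add: adj_sym)
    moreover have "ok F C (xs!(i-1)) (xs!i) (xs!Suc i)" using act i unfolding active_ok by blast
    ultimately show "ok E C (xs!(i-1)) (xs!i) (xs!Suc i)" using ok_mono[OF sub ac] by blast
  qed
qed



theorem proposition1:
  fixes V :: "'a set" and E :: "('a \<times> 'a) set" and JP :: "'a triple set"
  assumes "dag V E"
  shows "(minimally_markovian V JP E \<longrightarrow> sparsest_markov V JP E) \<and>
         (sparsest_markov V JP E \<longrightarrow> pearl_minimal V JP E) \<and>
         (pearl_minimal V JP E \<longrightarrow> causally_minimal V JP E)"
proof (intro conjI impI)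
  note dE = assms
  have acE: "acyclic E" using dE unfolding dag_def by simp
  have fE: "finite E" using finite_dag[OF dE] .
  show "sparsest_markov V JP E" if mm: "minimally_markovian V JP E"
  proof -
    have mk: "markovian V JP E" and af: "skel_P V JP = skel_G E"
      using mm unfolding minimally_markovian_def adjacency_faithful_def by auto
    have "card E \<le> card E'" if dF: "dag V E'" and mF: "markovian V JP E'" for E'
    proof -
      have acF: "acyclic E'" using dF unfolding dag_def by simp
      have fF: "finite E'" using finite_dag[OF dF] .
      have sub: "skel_P V JP \<subseteq> skel_G E'"
      proof
        fix s assume "s \<in> skel_P V JP"
        then obtain i j where s: "s = {i,j}" and ij: "i\<in>V" "j\<in>V" "i\<noteq>j"
          and nC: "\<not> (\<exists>C. C \<subseteq> V - {i,j} \<and> ({i},{j},C)\<in>JP)"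
          unfolding skel_P_def by blast
        have "adj E' i j"
        proof (rule ccontr)
          assume "\<not> adj E' i j"
          then obtain C where "({i},{j},C)\<in>J_G V E'" "C \<subseteq> V - {i,j}"
            using sep_exists[OF dF ij] by blast
          then show False using nC mF unfolding markovian_def by blast
        qed
        then show "s \<in> skel_G E'" unfolding s by (simp only: skel_adj)
      qed
      have "card E = card (skel_G E)" using card_skel[OF acE] by simp
      also have "\<dots> = card (skel_P V JP)" using af by simp
      also have "\<dots> \<le> card (skel_G E')" using sub finite_skel[OF fF] by (rule card_mono[rotated])
      also have "\<dots> \<le> card E'" using card_skel_le[OF fF] .
      finally show ?thesis .
    qed
    then show ?thesis unfolding sparsest_markov_def using dE mk by blast
  qed
  show "pearl_minimal V JP E" if sp: "sparsest_markov V JP E"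
  proof -
    have mk: "markovian V JP E" and least: "\<forall>E'. dag V E' \<and> markovian V JP E' \<longrightarrow> card E \<le> card E'"
      using sp unfolding sparsest_markov_def by auto
    have "\<not> (\<exists>E'. dag V E' \<and> J_G V E \<subset> J_G V E' \<and> J_G V E' \<subseteq> JP)"
    proof
      assume "\<exists>E'. dag V E' \<and> J_G V E \<subset> J_G V E' \<and> J_G V E' \<subseteq> JP"
      then obtain F where dF: "dag V F" and JJ: "J_G V E \<subset> J_G V F" and JP: "J_G V F \<subseteq> JP" by blast
      have acF: "acyclic F" using dF unfolding dag_def by simp
      have fF: "finite F" using finite_dag[OF dF] .
      have "markovian V JP F" unfolding markovian_def by (rule JP)
      then have le: "card E \<le> card F" using least dF by blast
      have sub: "skel_G F \<subseteq> skel_G E" using skel_sub[OF dE dF] JJ by blast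
      have "card (skel_G E) \<le> card (skel_G F)" using le card_skel[OF acE] card_skel[OF acF] by simp
      moreover have "card (skel_G F) \<le> card (skel_G E)" by (rule card_mono[OF finite_skel[OF fE] sub])
      ultimately have "card (skel_G F) = card (skel_G E)" by linarith
      then have seq: "skel_G F = skel_G E" by (rule card_subset_eq[OF finite_skel[OF fE] sub])
      have adjeq: "adj F p q \<longleftrightarrow> adj E p q" for p q
      proof -
        have "adj F p q \<longleftrightarrow> {p,q} \<in> skel_G F" by (simp only: skel_adj)
        also have "\<dots> \<longleftrightarrow> {p,q} \<in> skel_G E" by (simp only: seq)
        also have "\<dots> \<longleftrightarrow> adj E p q" by (simp only: skel_adj)
        finally show ?thesis .
      qed
      have vseq: "vs E p q r \<longleftrightarrow> vs F p q r" for p q r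
        by (rule vs_equiv[OF dE dF adjeq]) (use JJ in blast)
      have "J_G V F \<subseteq> J_G V E"
      proof
        fix t assume t: "t \<in> J_G V F"
        then obtain A B C where tt: "t = (A,B,C)" and dt: "disjoint_triple V (A,B,C)" and ds: "d_separated F A B C"
          unfolding J_G_def by blast
        have "d_separated E A B C"
          unfolding d_separated_def
        proof (intro ballI notI)
          fix a b assume ab: "a\<in>A" "b\<in>B" and "\<exists>xs. is_path E a b xs \<and> active_path E C xs"
          then obtain xs where px: "is_path E a b xs" and ax: "active_path E C xs" by blast
          obtain ys where "is_path F a b ys" "active_path F C ys"
            using transfer[OF acE acF adjeq vseq px ax] by blast
          then show False using ds ab unfolding d_separated_def by blast
        qed
        then show "t \<in> J_G V E" unfolding tt J_G_def using dt by blast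
      qed
      then show False using JJ by blast
    qed
    then show ?thesis unfolding pearl_minimal_def using dE mk by blast
  qed
  show "causally_minimal V JP E" if pm: "pearl_minimal V JP E"
  proof -
    have mk: "markovian V JP E" and nP: "\<not> (\<exists>E'. dag V E' \<and> J_G V E \<subset> J_G V E' \<and> J_G V E' \<subseteq> JP)"
      using pm unfolding pearl_minimal_def by auto
    have "\<not> (\<exists>E'. E' \<subset> E \<and> dag V E' \<and> markovian V JP E')"
    proof
      assume "\<exists>E'. E' \<subset> E \<and> dag V E' \<and> markovian V JP E'"
      then obtain F where FE: "F \<subset> E" and dF: "dag V F" and mF: "markovian V JP F" by blast
      have acF: "acyclic F" using dF unfolding dag_def by simp
      have sub: "J_G V E \<subseteq> J_G V F"
      proof
        fix t assume t: "t \<in> J_G V E"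
        then obtain A B C where tt: "t = (A,B,C)" and dt: "disjoint_triple V (A,B,C)" and ds: "d_separated E A B C"
          unfolding J_G_def by blast
        have "d_separated F A B C"
          unfolding d_separated_def
        proof (intro ballI notI)
          fix a b assume ab: "a\<in>A" "b\<in>B" and "\<exists>xs. is_path F a b xs \<and> active_path F C xs"
          then obtain xs where px: "is_path F a b xs" and ax: "active_path F C xs" by blast
          have "F \<subseteq> E" using FE by blast
          then have "is_path E a b xs \<and> active_path E C xs" using active_mono[OF _ acE px ax] by blast
          then show False using ds ab unfolding d_separated_def by blast
        qed
        then show "t \<in> J_G V F" unfolding tt J_G_def using dt by blast
      qed
      obtain x y where xy: "(x,y)\<in>E" "(x,y)\<notin>F" using FE by auto
      have V: "x\<in>V" "y\<in>V" using xy dE unfolding dag_def by auto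
      have ne: "x \<noteq> y"
      proof
        assume "x = y" then show False using xy acyc1[OF acE] by simp
      qed
      have na: "\<not> adj F x y"
      proof
        assume "adj F x y"
        then have "(y,x)\<in>F" using xy unfolding adj_def by blast
        then have "(y,x)\<in>E" using FE by blast
        then show False using xy acyc2[OF acE] by blast
      qed
      obtain C where JC: "({x},{y},C)\<in>J_G V F" using sep_exists[OF dF V ne na] by blast
      have "({x},{y},C)\<notin>J_G V E"
      proof
        assume "({x},{y},C)\<in>J_G V E"
        moreover have "is_path E x y [x,y]" using xy ne by (intro path2) (simp_all add: adj_def)
        ultimately show False using JG_dsep active2 by fast
      qed
      then have "J_G V E \<subset> J_G V F" using sub JC by blast
      moreover have "J_G V F \<subseteq> JP" using mF unfolding markovian_def .
      ultimately show False using nP dF by blast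
    qed
    then show ?thesis unfolding causally_minimal_def using mk by blast
  qed
qed

end
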